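(* Let $(q_n)_{n\ge1}$ be the Fibonacci Quilt sequence. Then (i) $q_{n+1}=q_n+q_{n-4}$ for all $n\ge6$; (ii) $q_{n+1}=q_{n-1}+q_{n-2}$ for all $n\ge5$; (iii) $\sum_{i=1}^n q_i = q_{n+5}-6$ for all $n\ge1$.
   Context: Given an increasing sequence of positive integers $(q_i)_{i\ge1}$, an FQ-legal decomposition of an integer $m\ge0$ is an expression $m=q_{\ell_1}+q_{\ell_2}+\cdots+q_{\ell_t}$ ($t\ge0$, the empty sum representing $0$) with distinct indices $\ell_1>\ell_2>\cdots>\ell_t$ such that $|\ell_i-\ell_j|\notin\{1,3,4\}$ for all $i,j$, and $\{1,3\}\not\subset\{\ell_1,\dots,\ell_t\}$. The Fibonacci Quilt sequence is the increasing sequence of positive integers $(q_i)_{i\ge1}$ in which each $q_i$ is the smallest positive integer having no FQ-legal decomposition using only $q_1,\dots,q_{i-1}$. Its first terms are $1,2,3,4,5,7,9,12,16,21,28,37,49,\dots$. *)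

theory Defs
  imports Main
begin

definition FQ_legal :: "nat set \<Rightarrow> bool" where
  "FQ_legal S \<longleftrightarrow> (\<forall>i\<in>S. \<forall>j\<in>S. \<bar>int i - int j\<bar> \<notin> {1, 3, 4}) \<and> \<not> {1, 3} \<subseteq> S"

definition FQ_next :: "nat list \<Rightarrow> nat" where
  "FQ_next xs = (LEAST m. 0 < m \<and>
     \<not> (\<exists>S. S \<subseteq> {1..length xs} \<and> FQ_legal S \<and> (\<Sum>i\<in>S. xs ! (i - 1)) = m))"

fun FQ_list :: "nat \<Rightarrow> nat list" where
  "FQ_list 0 = []"
| "FQ_list (Suc n) = FQ_list n @ [FQ_next (FQ_list n)]"

text \<open>The Fibonacci Quilt sequence, 1-indexed: fq 1 = 1, fq 2 = 2, ... (fq 0 is junk).\<close>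
definition fq :: "nat \<Rightarrow> nat" where
  "fq n = FQ_list n ! (n - 1)"

end

theory Submission
  imports Defs
begin

fun g :: "nat \<Rightarrow> nat" where
"g 0 = 0" | "g (Suc 0) = 1" | "g (Suc (Suc 0)) = 2" | "g (Suc(Suc(Suc 0))) = 3"
| "g (Suc(Suc(Suc(Suc 0)))) = 4" | "g (Suc(Suc(Suc(Suc(Suc n))))) = g (Suc(Suc(Suc n))) + g (Suc(Suc n))"

lemma g_rec: "5 \<le> k \<Longrightarrow> g k = g (k-2) + g (k-3)"
proof -
  assume "5 \<le> k"
  then obtain n where "k = n + 5" using le_iff_add by (metis add.commute)
  then have "k = Suc(Suc(Suc(Suc(Suc n))))" by simp
  then show ?thesis by simp
qed

lemma g_Suc_gt: "g n < g (Suc n)"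
proof (induction n rule: less_induct)
  case (less n)
  show ?case
  proof (cases "n \<le> 4")
    case True
    then have "n = 0 \<or> n = 1 \<or> n = 2 \<or> n = 3 \<or> n = 4" by auto
    then show ?thesis by (auto simp: eval_nat_numeral)
  next
    case False
    have a: "g (Suc n) = g (n-1) + g (n-2)" using g_rec[of "Suc n"] False by simp
    have b: "g n = g (n-2) + g (n-3)" using g_rec[of n] False by simp
    have c: "g (n-3) < g (Suc (n-3))" using less[of "n-3"] False by simp
    have d: "g (Suc (n-3)) < g (Suc (Suc (n-3)))" using less[of "Suc (n-3)"] False by simp
    have "Suc (Suc (n-3)) = n - 1" using False by simp
    then show ?thesis using a b c d by simp
  qed
qed

lemma g_smono: "strict_mono g"
  by (simp add: g_Suc_gt strict_mono_Suc_iff)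

lemma g_less: "m < n \<Longrightarrow> g m < g n"
  using g_smono strict_mono_less by blast

lemma g_le: "m \<le> n \<Longrightarrow> g m \<le> g n"
  using g_smono strict_mono_less_eq by blast

lemma g_rec4: "6 \<le> m \<Longrightarrow> g (m+1) = g m + g (m-4)"
proof -
  assume m: "6 \<le> m"
  have "g (m+1) = g (m-1) + g (m-2)" using g_rec[of "m+1"] m by simp
  moreover have "g m = g (m-2) + g (m-3)" using g_rec[of m] m by simp
  moreover have "g (m-1) = g (m-3) + g (m-4)" using g_rec[of "m-1"] m
    by (simp add: numeral_eq_Suc)
  ultimately show ?thesis by simp
qed

lemma g3: "g m + g (m+1) \<le> g (m+3)"
proof (cases "m \<ge> 2")
  case True
  then have "g (m+3) = g (m+1) + g m" using g_rec[of "m+3"] by simp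
  then show ?thesis by simp
next
  case False
  then have "m = 0 \<or> m = 1" by auto
  then show ?thesis by (auto simp: eval_nat_numeral)
qed

lemma legal_sub: "FQ_legal S \<Longrightarrow> T \<subseteq> S \<Longrightarrow> FQ_legal T"
  unfolding FQ_legal_def by blast

lemma legal_gap: "FQ_legal S \<Longrightarrow> i \<in> S \<Longrightarrow> j \<in> S \<Longrightarrow> i = j + d \<Longrightarrow> d \<in> {1,3,4} \<Longrightarrow> False"
proof -
  assume a: "FQ_legal S" "i \<in> S" "j \<in> S" "i = j + d" "d \<in> {1,3,4}"
  then have "\<bar>int i - int j\<bar> \<notin> {1,3,4}" unfolding FQ_legal_def by blast
  moreover have "\<bar>int i - int j\<bar> = int d" using a by simp
  ultimately show False using a by auto
qed

lemma legal13: "FQ_legal S \<Longrightarrow> 1 \<in> S \<Longrightarrow> 3 \<in> S \<Longrightarrow> False"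
  unfolding FQ_legal_def by simp

lemma small: "\<forall>S\<in>Pow {1,2,3,4,5::nat}. FQ_legal S \<longrightarrow> (\<forall>n\<le>5. S \<subseteq> {1..n} \<longrightarrow> sum g S \<noteq> g (Suc n))"
  by (simp add: Pow_insert FQ_legal_def numeral_eq_Suc le_Suc_eq)


lemma small_B: "n \<le> 5 \<Longrightarrow> S \<subseteq> {1..n} \<Longrightarrow> FQ_legal S \<Longrightarrow> sum g S \<noteq> g (Suc n)"
proof -
  assume a: "n \<le> 5" "S \<subseteq> {1..n}" "FQ_legal S"
  have "S \<subseteq> {1,2,3,4,5}" using a by auto
  then show ?thesis using small a by blast
qed

lemma sum_rm: "finite S \<Longrightarrow> m \<in> S \<Longrightarrow> sum g S = g m + sum g (S - {m})"
  by (simp add: sum.remove)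

lemma bound: "FQ_legal S \<Longrightarrow> S \<subseteq> {1..m} \<Longrightarrow> sum g S < g (m+3)"
proof (induction m arbitrary: S rule: less_induct)
  case (less m)
  have fin: "finite S" using less.prems(2) finite_subset by blast
  show ?case
  proof (cases "m \<in> S")
    case False
    show ?thesis
    proof (cases "m = 0")
      case True
      then have "S = {}" using less.prems(2) by auto
      then show ?thesis using True by (simp add: eval_nat_numeral)
    next
      case m0: False
      have "S \<subseteq> {1..m-1}"
      proof
        fix x assume x: "x \<in> S"
        then have "x \<ge> 1" "x \<le> m" "x \<noteq> m" using less.prems(2) False by auto
        then show "x \<in> {1..m-1}" by simp
      qed
      then have "sum g S < g (m-1+3)" using less.IH[of "m-1"] less.prems(1) m0 by simp
      also have "\<dots> \<le> g (m+3)" by (rule g_le) simp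
      finally show ?thesis .
    qed
  next
    case mS: True
    have m1: "m \<ge> 1" using mS less.prems(2) by auto
    have S1: "sum g S = g m + sum g (S - {m})" using sum_rm[OF fin mS] .
    have gap: "x + 1 \<noteq> m \<and> x + 3 \<noteq> m \<and> x + 4 \<noteq> m" if xS: "x \<in> S" for x
      using legal_gap[OF less.prems(1) mS xS, of 1] legal_gap[OF less.prems(1) mS xS, of 3]
        legal_gap[OF less.prems(1) mS xS, of 4] by auto
    show ?thesis
    proof (cases "m \<ge> 2 \<and> m - 2 \<in> S")
      case True
      have m4: "m \<ge> 4"
      proof (rule ccontr)
        assume "\<not> m \<ge> 4"
        then have "m = 2 \<or> m = 3" using True by auto
        then show False
        proof
          assume "m = 2" then show False using True less.prems(2) by auto
        next
          assume "m = 3" then show False using True mS legal13[OF less.prems(1)] by auto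
        qed
      qed
      have m2S: "m - 2 \<in> S - {m}" using True m4 by auto
      have S2: "sum g (S - {m}) = g (m-2) + sum g (S - {m} - {m-2})"
        using sum_rm[OF _ m2S] fin by simp
      have m2: "m - 2 \<in> S" using True by simp
      have gap2: "x + 1 \<noteq> m-2 \<and> x + 3 \<noteq> m-2 \<and> x + 4 \<noteq> m-2
           \<and> m - 2 + 1 \<noteq> x \<and> m-2+3 \<noteq> x" if xS: "x \<in> S" for x
        using legal_gap[OF less.prems(1) m2 xS, of 1] legal_gap[OF less.prems(1) m2 xS, of 3]
        legal_gap[OF less.prems(1) m2 xS, of 4] legal_gap[OF less.prems(1) xS m2, of 1]
        legal_gap[OF less.prems(1) xS m2, of 3] by auto
      have sub: "S - {m} - {m-2} \<subseteq> {1..m-7}"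
      proof
        fix x assume x: "x \<in> S - {m} - {m-2}"
        then have "x \<ge> 1" "x \<le> m" using less.prems(2) by auto
        moreover have "x + 1 \<noteq> m \<and> x + 3 \<noteq> m \<and> x + 4 \<noteq> m" using gap x by auto
        moreover have "x + 1 \<noteq> m-2 \<and> x + 3 \<noteq> m-2 \<and> x + 4 \<noteq> m-2 \<and> m - 2 + 1 \<noteq> x \<and> m-2+3 \<noteq> x"
          using gap2 x by auto
        ultimately show "x \<in> {1..m-7}" using x m4 by auto
      qed
      have b: "sum g (S - {m} - {m-2}) < g (m-1)"
      proof (cases "m \<ge> 8")
        case True
        have "sum g (S - {m} - {m-2}) < g (m-7+3)"
          using less.IH[of "m-7" "S - {m} - {m-2}"] sub legal_sub[OF less.prems(1), of "S - {m} - {m-2}"] True by auto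
        also have "\<dots> \<le> g (m-1)" by (rule g_le) (use True in simp)
        finally show ?thesis .
      next
        case False
        then have e: "S - {m} - {m-2} = {}" using sub by auto
        have "g 0 < g (m-1)" by (rule g_less) (use m4 in simp)
        then show ?thesis unfolding e by simp
      qed
      have "g (m+3) \<ge> g m + g (m+1)" using g3 by simp
      moreover have "g (m+1) = g (m-1) + g (m-2)" using g_rec[of "m+1"] m4 by simp
      ultimately show ?thesis using S1 S2 b by simp
    next
      case False
      have sub: "S - {m} \<subseteq> {1..m-5}"
      proof
        fix x assume x: "x \<in> S - {m}"
        then have "x \<ge> 1" "x \<le> m" using less.prems(2) by auto
        moreover have "x + 1 \<noteq> m \<and> x + 3 \<noteq> m \<and> x + 4 \<noteq> m" using gap x by auto
        moreover have "x + 2 \<noteq> m" using False x by auto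
        ultimately show "x \<in> {1..m-5}" using x by auto
      qed
      have b: "sum g (S - {m}) \<le> g (m-2)"
      proof (cases "m \<ge> 6")
        case True
        have "sum g (S - {m}) < g (m-5+3)"
          using less.IH[of "m-5" "S - {m}"] sub legal_sub[OF less.prems(1), of "S - {m}"] True by auto
        also have "m-5+3 = m-2" using True by simp
        finally show ?thesis by simp
      next
        case False
        then have e: "S - {m} = {}" using sub by auto
        show ?thesis unfolding e by simp
      qed
      have "g (m+3) \<ge> g m + g (m+1)" using g3 by simp
      moreover have "g (m-2) < g (m+1)" by (rule g_less) simp
      ultimately show ?thesis using S1 b by simp
    qed
  qed
qed


lemma notrep: "FQ_legal S \<Longrightarrow> S \<subseteq> {1..n} \<Longrightarrow> sum g S \<noteq> g (Suc n)"
proof (induction n arbitrary: S rule: less_induct)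
  case (less n)
  show ?case
  proof (cases "n \<le> 5")
    case True
    then show ?thesis using small_B less.prems by blast
  next
    case n6: False
    have fin: "finite S" using less.prems(2) finite_subset by blast
    have Sb: "x \<ge> 1 \<and> x \<le> n" if "x \<in> S" for x using less.prems(2) that by auto
    show ?thesis
    proof (cases "n \<in> S")
      case nS: True
      have S1: "sum g S = g n + sum g (S - {n})" using sum_rm[OF fin nS] .
      have gr: "g (Suc n) = g n + g (n-4)" using g_rec4[of n] n6 by simp
      have gap: "x + 1 \<noteq> n \<and> x + 3 \<noteq> n \<and> x + 4 \<noteq> n" if xS: "x \<in> S" for x
        using legal_gap[OF less.prems(1) nS xS, of 1] legal_gap[OF less.prems(1) nS xS, of 3]
          legal_gap[OF less.prems(1) nS xS, of 4] by auto
      show ?thesis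
      proof
        assume eq: "sum g S = g (Suc n)"
        then have e2: "sum g (S - {n}) = g (n-4)" using S1 gr by simp
        show False
        proof (cases "n - 2 \<in> S")
          case True
          then have "n - 2 \<in> S - {n}" using n6 by auto
          then have "g (n-2) \<le> sum g (S - {n})" using fin by (intro member_le_sum) auto
          moreover have "g (n-4) < g (n-2)" by (rule g_less) (use n6 in simp)
          ultimately show False using e2 by simp
        next
          case False
          have sub: "S - {n} \<subseteq> {1..n-5}"
          proof
            fix x assume x: "x \<in> S - {n}"
            then have "x \<ge> 1" "x \<le> n" "x \<noteq> n" "x \<noteq> n-2" using Sb False by auto
            moreover have "x + 1 \<noteq> n \<and> x + 3 \<noteq> n \<and> x + 4 \<noteq> n" using gap x by auto
            ultimately show "x \<in> {1..n-5}" by (simp; arith)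
          qed
          have "sum g (S - {n}) \<noteq> g (Suc (n-5))"
            using less.IH[of "n-5" "S - {n}"] sub legal_sub[OF less.prems(1), of "S - {n}"] n6 by auto
          moreover have "Suc (n-5) = n-4" using n6 by simp
          ultimately show False using e2 by simp
        qed
      qed
    next
      case nS: False
      show ?thesis
      proof (cases "n - 1 \<in> S")
        case n1S: True
        have S1: "sum g S = g (n-1) + sum g (S - {n-1})" using sum_rm[OF fin n1S] .
        have gr: "g (Suc n) = g (n-1) + g (n-2)" using g_rec[of "Suc n"] n6 by simp
        have gap: "x + 1 \<noteq> n-1 \<and> x + 3 \<noteq> n-1 \<and> x + 4 \<noteq> n-1" if xS: "x \<in> S" for x
          using legal_gap[OF less.prems(1) n1S xS, of 1] legal_gap[OF less.prems(1) n1S xS, of 3]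
            legal_gap[OF less.prems(1) n1S xS, of 4] by auto
        show ?thesis
        proof
          assume eq: "sum g S = g (Suc n)"
          then have e2: "sum g (S - {n-1}) = g (n-2)" using S1 gr by simp
          show False
          proof (cases "n - 3 \<in> S")
            case n3S: True
            then have n3S': "n - 3 \<in> S - {n-1}" using n6 by auto
            have S2: "sum g (S - {n-1}) = g (n-3) + sum g (S - {n-1} - {n-3})"
              using sum_rm[OF _ n3S'] fin by simp
            have gap3: "x + 1 \<noteq> n-3 \<and> x + 3 \<noteq> n-3 \<and> x + 4 \<noteq> n-3" if xS: "x \<in> S" for x
              using legal_gap[OF less.prems(1) n3S xS, of 1] legal_gap[OF less.prems(1) n3S xS, of 3]
                legal_gap[OF less.prems(1) n3S xS, of 4] by auto
            have sub: "S - {n-1} - {n-3} \<subseteq> {1..n-8}"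
            proof
              fix x assume x: "x \<in> S - {n-1} - {n-3}"
              then have "x \<ge> 1" "x \<le> n" "x \<noteq> n" "x \<noteq> n-1" "x \<noteq> n-3" using Sb nS by auto
              moreover have "x + 1 \<noteq> n-1 \<and> x + 3 \<noteq> n-1 \<and> x + 4 \<noteq> n-1" using gap x by auto
              moreover have "x + 1 \<noteq> n-3 \<and> x + 3 \<noteq> n-3 \<and> x + 4 \<noteq> n-3" using gap3 x by auto
              ultimately show "x \<in> {1..n-8}" using n6 by (simp; arith)
            qed
            have e3: "g (n-3) + sum g (S - {n-1} - {n-3}) = g (n-2)" using e2 S2 by simp
            show False
            proof (cases "n \<ge> 9")
              case True
              have "g (n-3+1) = g (n-3) + g (n-3-4)" using g_rec4[of "n-3"] True by simp
              moreover have "n-3+1 = n-2" "n-3-4 = Suc (n-8)" using True by auto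
              ultimately have "sum g (S - {n-1} - {n-3}) = g (Suc (n-8))" using e3 by simp
              moreover have "sum g (S - {n-1} - {n-3}) \<noteq> g (Suc (n-8))"
                using less.IH[of "n-8" "S - {n-1} - {n-3}"] sub
                  legal_sub[OF less.prems(1), of "S - {n-1} - {n-3}"] True by auto
              ultimately show False by simp
            next
              case False
              then have e: "S - {n-1} - {n-3} = {}" using sub by auto
              have "g (n-3) < g (n-2)" by (rule g_less) (use n6 in simp)
              then show False using e3 unfolding e by simp
            qed
          next
            case False
            have sub: "S - {n-1} \<subseteq> {1..n-6}"
            proof
              fix x assume x: "x \<in> S - {n-1}"
              then have "x \<ge> 1" "x \<le> n" "x \<noteq> n" "x \<noteq> n-1" "x \<noteq> n-3" using Sb nS False by auto
              moreover have "x + 1 \<noteq> n-1 \<and> x + 3 \<noteq> n-1 \<and> x + 4 \<noteq> n-1" using gap x by auto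
              ultimately show "x \<in> {1..n-6}" using n6 by (simp; arith)
            qed
            have "sum g (S - {n-1}) < g (n-6+3)"
              using bound[OF legal_sub[OF less.prems(1), of "S - {n-1}"] sub] by auto
            also have "\<dots> \<le> g (n-2)" by (rule g_le) (use n6 in simp)
            finally show False using e2 by simp
          qed
        qed
      next
        case False
        have sub: "S \<subseteq> {1..n-2}"
        proof
          fix x assume x: "x \<in> S"
          then have "x \<ge> 1" "x \<le> n" "x \<noteq> n" "x \<noteq> n-1" using Sb nS False by auto
          then show "x \<in> {1..n-2}" by (simp; arith)
        qed
        have "sum g S < g (n-2+3)" using bound[OF less.prems(1) sub] .
        moreover have "n-2+3 = Suc n" using n6 by simp
        ultimately show ?thesis by simp
      qed
    qed
  qed
qed


lemma legal_insert:
  assumes L: "FQ_legal S'" and sub: "S' \<subseteq> {1..k}" and nk: "k + 5 \<le> n" and n3: "n \<noteq> 1" "n \<noteq> 3"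
  shows "FQ_legal (insert n S')"
  unfolding FQ_legal_def
proof (intro conjI ballI)
  fix i j assume i: "i \<in> insert n S'" and j: "j \<in> insert n S'"
  show "\<bar>int i - int j\<bar> \<notin> {1, 3, 4}"
  proof (cases "i = n")
    case True
    show ?thesis
    proof (cases "j = n")
      case True then show ?thesis using \<open>i = n\<close> by simp
    next
      case False then have "j \<le> k" using j sub by auto
      then show ?thesis using \<open>i = n\<close> nk by auto
    qed
  next
    case False
    then have iS: "i \<in> S'" using i by simp
    show ?thesis
    proof (cases "j = n")
      case True
      have "i \<le> k" using iS sub by auto
      then show ?thesis using True nk by auto
    next
      case False
      then have "j \<in> S'" using j by simp
      then show ?thesis using L iS unfolding FQ_legal_def by blast
    qed
  qed
next
  show "\<not> {1, 3} \<subseteq> insert n S'" using L n3 unfolding FQ_legal_def by auto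
qed

lemma rep: "m < g (Suc n) \<Longrightarrow> \<exists>S. S \<subseteq> {1..n} \<and> FQ_legal S \<and> sum g S = m"
proof (induction n arbitrary: m rule: less_induct)
  case (less n)
  show ?case
  proof (cases "n \<le> 5")
    case True
    show ?thesis
    proof (cases "m = 0")
      case True
      then show ?thesis by (intro exI[of _ "{}"]) (simp add: FQ_legal_def)
    next
      case m0: False
      show ?thesis
      proof (cases "m \<le> n")
        case True
        have "m = 1 \<or> m = 2 \<or> m = 3 \<or> m = 4 \<or> m = 5" using True m0 \<open>n \<le> 5\<close> by auto
        then have gm: "g m = m" by (auto simp: eval_nat_numeral)
        show ?thesis using m0 True gm by (intro exI[of _ "{m}"]) (auto simp: FQ_legal_def)
      next
        case False
        have "n = 0 \<or> n = 1 \<or> n = 2 \<or> n = 3 \<or> n = 4 \<or> n = 5" using \<open>n \<le> 5\<close> by auto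
        then have "n = 5 \<and> m = 6" using False less.prems by (auto simp: eval_nat_numeral)
        then show ?thesis by (intro exI[of _ "{2,4}"]) (auto simp: FQ_legal_def eval_nat_numeral)
      qed
    qed
  next
    case n6: False
    show ?thesis
    proof (cases "m < g n")
      case True
      then have "m < g (Suc (n-1))" using n6 by simp
      then obtain S where S: "S \<subseteq> {1..n-1}" "FQ_legal S" "sum g S = m"
        using less.IH[of "n-1" m] n6 by auto
      have "{1..n-1} \<subseteq> {1..n}" by auto
      then have "S \<subseteq> {1..n}" using S(1) by blast
      then show ?thesis using S by blast
    next
      case False
      have gr: "g (Suc n) = g n + g (n-4)" using g_rec4[of n] n6 by simp
      have "m - g n < g (n-4)" using less.prems gr False by linarith
      moreover have "Suc (n-5) = n-4" using n6 by simp
      ultimately have "m - g n < g (Suc (n-5))" by simp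
      then obtain S where S: "S \<subseteq> {1..n-5}" "FQ_legal S" "sum g S = m - g n"
        using less.IH[of "n-5" "m - g n"] n6 by auto
      have nS: "n \<notin> S" using S(1) n6 by (auto simp: subset_iff)
      have fin: "finite S" using S(1) finite_subset by blast
      have "FQ_legal (insert n S)" by (rule legal_insert[OF S(2) S(1)]) (use n6 in auto)
      moreover have "insert n S \<subseteq> {1..n}" using S(1) n6 by (auto simp: subset_iff)
      moreover have "sum g (insert n S) = m" using nS fin S(3) False by simp
      ultimately show ?thesis by blast
    qed
  qed
qed


lemma next_eq: "FQ_next (map g [1..<Suc n]) = g (Suc n)"
proof -
  define xs where "xs = map g [1..<Suc n]"
  have len: "length xs = n" unfolding xs_def by simp
  have key: "(\<Sum>i\<in>S. xs ! (i - 1)) = sum g S" if S: "S \<subseteq> {1..n}" for S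
  proof (rule sum.cong)
    fix i assume "i \<in> S"
    then have i: "1 \<le> i" "i \<le> n" using S by auto
    then show "xs ! (i - 1) = g i" unfolding xs_def by (simp del: upt_Suc)
  qed simp
  have "(LEAST m. 0 < m \<and> \<not> (\<exists>S. S \<subseteq> {1..length xs} \<and> FQ_legal S \<and> (\<Sum>i\<in>S. xs ! (i - 1)) = m))
        = g (Suc n)"
  proof (rule Least_equality)
    have "0 < g (Suc n)" using g_less[of 0 "Suc n"] by simp
    moreover have "\<not> (\<exists>S. S \<subseteq> {1..length xs} \<and> FQ_legal S \<and> (\<Sum>i\<in>S. xs ! (i - 1)) = g (Suc n))"
      using key notrep len by auto
    ultimately show "0 < g (Suc n) \<and> \<not> (\<exists>S. S \<subseteq> {1..length xs} \<and> FQ_legal S \<and> (\<Sum>i\<in>S. xs ! (i - 1)) = g (Suc n))"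
      by blast
  next
    fix y assume y: "0 < y \<and> \<not> (\<exists>S. S \<subseteq> {1..length xs} \<and> FQ_legal S \<and> (\<Sum>i\<in>S. xs ! (i - 1)) = y)"
    show "g (Suc n) \<le> y"
    proof (rule ccontr)
      assume "\<not> g (Suc n) \<le> y"
      then obtain S where "S \<subseteq> {1..n}" "FQ_legal S" "sum g S = y" using rep[of y n] by auto
      then show False using y key len by auto
    qed
  qed
  then show ?thesis unfolding FQ_next_def xs_def .
qed

lemma list_eq: "FQ_list n = map g [1..<Suc n]"
proof (induction n)
  case 0
  then show ?case by simp
next
  case (Suc n)
  then show ?case using next_eq[of n] by simp
qed

lemma fq_eq: "n \<ge> 1 \<Longrightarrow> fq n = g n"
  unfolding fq_def list_eq by (simp del: upt_Suc)

lemma gsum: "sum g {1..Suc n} + 6 = g (n + 6)"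
proof (induction n)
  case 0
  then show ?case by (simp add: eval_nat_numeral)
next
  case (Suc n)
  have "g (n + 6 + 1) = g (n + 6) + g (n + 6 - 4)" using g_rec4[of "n+6"] by simp
  moreover have "n + 6 - 4 = Suc (Suc n)" "n + 6 + 1 = Suc n + 6" by auto
  ultimately have "g (Suc n + 6) = g (n + 6) + g (Suc (Suc n))" by simp
  then show ?case using Suc by simp
qed

theorem mainTheorem8:
  shows "(\<forall>n\<ge>6. fq (n + 1) = fq n + fq (n - 4))
       \<and> (\<forall>n\<ge>5. fq (n + 1) = fq (n - 1) + fq (n - 2))
       \<and> (\<forall>n\<ge>1. int (\<Sum>i=1..n. fq i) = int (fq (n + 5)) - 6)"
proof (intro conjI allI impI)
  fix n :: nat assume n: "n \<ge> 6"
  then show "fq (n + 1) = fq n + fq (n - 4)" using g_rec4[of n] fq_eq by simp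
next
  fix n :: nat assume n: "n \<ge> 5"
  then show "fq (n + 1) = fq (n - 1) + fq (n - 2)" using g_rec[of "n+1"] fq_eq by simp
next
  fix n :: nat assume n: "n \<ge> 1"
  have "(\<Sum>i=1..n. fq i) = sum g {1..n}" by (rule sum.cong) (auto simp: fq_eq)
  moreover obtain k where k: "n = Suc k" using n by (cases n) auto
  moreover have "fq (n + 5) = g (k + 6)" using k fq_eq[of "n+5"] by (simp add: add.commute)
  ultimately have "(\<Sum>i=1..n. fq i) + 6 = fq (n + 5)" using gsum[of k] by simp
  then show "int (\<Sum>i=1..n. fq i) = int (fq (n + 5)) - 6" by linarith
qed

end
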